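(* Let $p\neq 2$ be a prime and $G=Z_{p^{\lambda_1}}\times\cdots\times Z_{p^{\lambda_n}}$ with $0<\lambda_1<\cdots<\lambda_n$. The poset $J(G)$ is self-dual; an order-reversing involution of $J(G)$ is given by $J(i,j)\mapsto J(i,\lambda_i-j+1)$.
   Context: Tuples are ordered componentwise; for $\mathbf 0\le\mathbf a\le(\lambda_1,\dots,\lambda_n)$, $T(\mathbf a)$ is the set of $(g_1,\dots,g_n)\in G$ with $|g_i|=p^{a_i}$, and $R(\mathbf a)=\bigcup_{\mathbf b\le\mathbf a}T(\mathbf b)$. For $i\in\{1,\dots,n\}$ and $j\in\{1,\dots,\lambda_i\}$, $J(i,j)=R(\mathbf a)$ where $a_k=j$ for $k\ge i$ and $a_k=\max\{0,\,j-(\lambda_i-\lambda_k)\}$ for $k<i$. $J(G)$ is the set of all $J(i,j)$ (these are exactly the join-irreducible elements of the lattice of characteristic subgroups of $G$), partially ordered by inclusion. *)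

theory Defs
  imports "HOL-Computational_Algebra.Primes" "HOL-Algebra.Elementary_Groups" "HOL-Algebra.Multiplicative_Group"
begin

definition Zfac :: "nat \<Rightarrow> (nat \<Rightarrow> nat) \<Rightarrow> nat \<Rightarrow> int monoid" where
  "Zfac p lam i = integer_mod_group (p ^ lam i)"

definition Gcar :: "nat \<Rightarrow> (nat \<Rightarrow> nat) \<Rightarrow> nat \<Rightarrow> (nat \<Rightarrow> int) set" where
  "Gcar p lam n = (\<Pi>\<^sub>E i\<in>{1..n}. carrier (Zfac p lam i))"

definition Tset :: "nat \<Rightarrow> (nat \<Rightarrow> nat) \<Rightarrow> nat \<Rightarrow> (nat \<Rightarrow> nat) \<Rightarrow> (nat \<Rightarrow> int) set" where
  "Tset p lam n a = {g \<in> Gcar p lam n. \<forall>i\<in>{1..n}. group.ord (Zfac p lam i) (g i) = p ^ a i}"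

definition Rset :: "nat \<Rightarrow> (nat \<Rightarrow> nat) \<Rightarrow> nat \<Rightarrow> (nat \<Rightarrow> nat) \<Rightarrow> (nat \<Rightarrow> int) set" where
  "Rset p lam n a = (\<Union>b \<in> {b. \<forall>i\<in>{1..n}. b i \<le> a i}. Tset p lam n b)"

text \<open>J(i,j) = R(a) with a_k = j for k >= i and a_k = max 0 (j - (lam i - lam k)) for k < i
  (natural-number subtraction truncates at 0, which realises the max).\<close>
definition Jset :: "nat \<Rightarrow> (nat \<Rightarrow> nat) \<Rightarrow> nat \<Rightarrow> nat \<Rightarrow> nat \<Rightarrow> (nat \<Rightarrow> int) set" where
  "Jset p lam n i j = Rset p lam n (\<lambda>k. if i \<le> k then j else j - (lam i - lam k))"

definition JG :: "nat \<Rightarrow> (nat \<Rightarrow> nat) \<Rightarrow> nat \<Rightarrow> (nat \<Rightarrow> int) set set" where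
  "JG p lam n = {Jset p lam n i j | i j. 1 \<le> i \<and> i \<le> n \<and> 1 \<le> j \<and> j \<le> lam i}"

end

theory Submission
  imports Defs
begin


definition AA :: "(nat \<Rightarrow> nat) \<Rightarrow> nat \<Rightarrow> nat \<Rightarrow> nat \<Rightarrow> nat" where
  "AA lam i j = (\<lambda>k. if i \<le> k then j else j - (lam i - lam k))"

lemma lam_mono:
  fixes lam :: "nat \<Rightarrow> nat"
  assumes "\<forall>i. 1 \<le> i \<and> i < n \<longrightarrow> lam i < lam (i + 1)"
  shows "1 \<le> a \<Longrightarrow> a < (b::nat) \<Longrightarrow> b \<le> n \<Longrightarrow> lam a < lam b"
proof (induction b)
  case 0 then show ?case by simp
next
  case (Suc b)
  show ?case
  proof (cases "a = b")
    case True then show ?thesis using assms Suc.prems by auto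
  next
    case False
    then have "lam a < lam b" using Suc by auto
    also have "lam b < lam (Suc b)" using assms Suc.prems False by auto
    finally show ?thesis .
  qed
qed

lemma AA_le:
  assumes lmono: "\<And>a b. 1 \<le> a \<Longrightarrow> a < b \<Longrightarrow> b \<le> n \<Longrightarrow> lam a < lam b"
    and "1 \<le> i" "i \<le> n" "j \<le> lam i" "1 \<le> k" "k \<le> n"
  shows "AA lam i j k \<le> lam k"
proof (cases "i \<le> k")
  case True
  have "lam i \<le> lam k"
  proof (cases "i = k")
    case False
    then have "i < k" using True by simp
    then show ?thesis using less_imp_le[OF lmono[of i k]] assms by simp
  qed simp
  then show ?thesis using True assms by (simp add: AA_def)
next
  case False
  then show ?thesis using assms by (simp add: AA_def)
qed

lemma AA_rev:
  assumes lmono: "\<And>a b. 1 \<le> a \<Longrightarrow> a < b \<Longrightarrow> b \<le> n \<Longrightarrow> lam a < lam b"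
    and i: "1 \<le> i" "i \<le> n" "1 \<le> j" "j \<le> lam i"
    and i': "1 \<le> i'" "i' \<le> n" "1 \<le> j'" "j' \<le> lam i'"
    and le: "\<forall>k\<in>{1..n}. AA lam i j k \<le> AA lam i' j' k"
  shows "\<forall>k\<in>{1..n}. AA lam i' (lam i' - j' + 1) k \<le> AA lam i (lam i - j + 1) k"
proof
  fix k assume k: "k \<in> {1..n}"
  have m: "\<And>a b. 1 \<le> a \<Longrightarrow> a \<le> b \<Longrightarrow> b \<le> n \<Longrightarrow> lam a \<le> lam b"
    using lmono by (metis le_less)
  have li: "AA lam i j i \<le> AA lam i' j' i" using le i by auto
  show "AA lam i' (lam i' - j' + 1) k \<le> AA lam i (lam i - j + 1) k"
  proof (cases "i \<le> i'")
    case True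
    have "lam i \<le> lam i'" using m[of i i'] True i i' by auto
    then have c: "j + lam i' - lam i \<le> j'" using li True i by (cases "i = i'") (auto simp: AA_def)
    show ?thesis
    proof (cases "i' \<le> k")
      case True
      then show ?thesis using c i i' \<open>i \<le> i'\<close> by (simp add: AA_def)
    next
      case False
      note F = this
      show ?thesis
      proof (cases "i \<le> k")
        case True
        then show ?thesis using c i i' F by (simp add: AA_def)
      next
        case False
        then show ?thesis using c i i' F \<open>lam i \<le> lam i'\<close> by (simp add: AA_def)
      qed
    qed
  next
    case False
    then have lt: "lam i' < lam i" using lmono[of i' i] i i' by auto
    have c: "j \<le> j'" using li False by (simp add: AA_def)
    show ?thesis
    proof (cases "i \<le> k")
      case True
      then show ?thesis using c lt False i i' by (simp add: AA_def)
    next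
      case F: False
      show ?thesis
      proof (cases "i' \<le> k")
        case True
        have "lam i' \<le> lam k" using m[of i' k] True k i' by auto
        moreover have "lam k \<le> lam i" using m[of k i] F k i by auto
        ultimately show ?thesis using c F True i i' by (simp add: AA_def)
      next
        case False
        have "lam k \<le> lam i'" using m[of k i'] False k i' by auto
        moreover have "lam k \<le> lam i" using m[of k i] F k i by auto
        ultimately show ?thesis using c F False i i' by (simp add: AA_def)
      qed
    qed
  qed
qed

lemma R_mono:
  assumes "\<forall>k\<in>{1..n}. a k \<le> b k"
  shows "Rset p lam n a \<subseteq> Rset p lam n b"
  using assms unfolding Rset_def by (auto intro: order_trans)

lemma ord_elem:
  assumes "prime p" "a \<le> L"
  defines "x \<equiv> int (p^(L-a)) mod int (p^L)"
  shows "x \<in> carrier (integer_mod_group (p^L)) \<and> group.ord (integer_mod_group (p^L)) x = p^a"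
proof
  have pos: "p > 0" using assms prime_gt_0_nat by blast
  then have N: "p^L > 0" by simp
  show xc: "x \<in> carrier (integer_mod_group (p^L))"
    using N by (simp add: carrier_integer_mod_group x_def)
  have eqN: "p^L = p^a * p^(L-a)" using assms(2) by (simp flip: power_add)
  have "\<forall>m. pow (integer_mod_group (p^L)) x m = one (integer_mod_group (p^L)) \<longleftrightarrow> p^a dvd m"
  proof
    fix m :: nat
    have "pow (integer_mod_group (p^L)) x m = (int m * x) mod int (p^L)" by simp
    also have "\<dots> = int (m * p^(L-a)) mod int (p^L)"
      by (simp add: x_def mod_mult_right_eq)
    finally have "pow (integer_mod_group (p^L)) x m = 0 \<longleftrightarrow> p^L dvd m * p^(L-a)"
      by (metis of_nat_mod of_nat_eq_0_iff dvd_eq_mod_eq_0)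
    also have "\<dots> \<longleftrightarrow> p^a dvd m" using pos by (simp add: eqN)
    finally show "pow (integer_mod_group (p^L)) x m = one (integer_mod_group (p^L)) \<longleftrightarrow> p^a dvd m" by simp
  qed
  then show "group.ord (integer_mod_group (p^L)) x = p^a"
    using group.ord_unique[OF group_integer_mod_group xc] by blast
qed

lemma R_sub:
  assumes p: "prime p" and al: "\<forall>k\<in>{1..n}. a k \<le> lam k"
    and sub: "Rset p lam n a \<subseteq> Rset p lam n b"
  shows "\<forall>k\<in>{1..n}. a k \<le> b k"
proof -
  define g where "g = restrict (\<lambda>k. int (p^(lam k - a k)) mod int (p^(lam k))) {1..n}"
  have gk: "\<And>k. k \<in> {1..n} \<Longrightarrow> g k \<in> carrier (Zfac p lam k) \<and> group.ord (Zfac p lam k) (g k) = p ^ a k"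
    unfolding g_def Zfac_def using ord_elem[OF p] al by auto
  have "g \<in> Tset p lam n a"
    unfolding Tset_def Gcar_def using gk by (auto simp: g_def)
  then have "g \<in> Rset p lam n a" unfolding Rset_def by auto
  with sub have "g \<in> Rset p lam n b" by auto
  then obtain c where c: "\<forall>k\<in>{1..n}. c k \<le> b k" "g \<in> Tset p lam n c"
    unfolding Rset_def by auto
  have p1: "p > 1" using p prime_gt_1_nat by blast
  show ?thesis
  proof
    fix k assume k: "k \<in> {1..n}"
    have "p ^ a k = p ^ c k" using c(2) gk[OF k] k unfolding Tset_def by auto
    then have "a k = c k" using p1 power_inject_exp by blast
    then show "a k \<le> b k" using c(1) k by simp
  qed
qed


theorem mainTheorem17:
  fixes p n :: nat and lam :: "nat \<Rightarrow> nat"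
  assumes "prime p" and "p \<noteq> 2"
    and "0 < lam 1"
    and "\<forall>i. 1 \<le> i \<and> i < n \<longrightarrow> lam i < lam (i + 1)"
  shows "\<exists>\<phi>. (\<forall>X\<in>JG p lam n. \<phi> X \<in> JG p lam n)
          \<and> (\<forall>X\<in>JG p lam n. \<phi> (\<phi> X) = X)
          \<and> (\<forall>X\<in>JG p lam n. \<forall>Y\<in>JG p lam n. X \<subseteq> Y \<longrightarrow> \<phi> Y \<subseteq> \<phi> X)
          \<and> (\<forall>i j. 1 \<le> i \<and> i \<le> n \<and> 1 \<le> j \<and> j \<le> lam i \<longrightarrow>
                 \<phi> (Jset p lam n i j) = Jset p lam n i (lam i - j + 1))"
proof -
  have lm: "\<And>a b. 1 \<le> a \<Longrightarrow> a < b \<Longrightarrow> b \<le> n \<Longrightarrow> lam a < lam b"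
    using lam_mono[OF assms(4)] by blast
  define P where "P = {(i, j). 1 \<le> i \<and> i \<le> n \<and> 1 \<le> j \<and> j \<le> lam i}"
  have JA: "\<And>i j. Jset p lam n i j = Rset p lam n (AA lam i j)"
    by (simp add: Jset_def AA_def)
  have key: "Jset p lam n i' (lam i' - j' + 1) \<subseteq> Jset p lam n i (lam i - j + 1)"
    if "(i, j) \<in> P" "(i', j') \<in> P" "Jset p lam n i j \<subseteq> Jset p lam n i' j'" for i j i' j'
  proof -
    have "\<forall>k\<in>{1..n}. AA lam i j k \<le> lam k"
      using AA_le[of n lam i j, OF lm] that(1) by (auto simp: P_def)
    then have "\<forall>k\<in>{1..n}. AA lam i j k \<le> AA lam i' j' k"
      using R_sub[OF assms(1)] that(3) JA by metis
    then have "\<forall>k\<in>{1..n}. AA lam i' (lam i' - j' + 1) k \<le> AA lam i (lam i - j + 1) k"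
      using AA_rev[of n lam i j i' j', OF lm] that(1,2) by (auto simp: P_def)
    then show ?thesis using R_mono JA by metis
  qed
  have Pd: "(i, lam i - j + 1) \<in> P" if "(i, j) \<in> P" for i j
    using that by (auto simp: P_def)
  have Pdd: "lam i - (lam i - j + 1) + 1 = j" if "(i, j) \<in> P" for i j
    using that by (auto simp: P_def)
  have JG: "JG p lam n = (\<lambda>(i, j). Jset p lam n i j) ` P"
    by (auto simp: JG_def P_def)
  define \<phi> where "\<phi> X = (case (SOME ij. ij \<in> P \<and> X = Jset p lam n (fst ij) (snd ij)) of
      (i, j) \<Rightarrow> Jset p lam n i (lam i - j + 1))" for X
  have phi: "\<phi> (Jset p lam n i j) = Jset p lam n i (lam i - j + 1)" if "(i, j) \<in> P" for i j
  proof -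
    let ?X = "Jset p lam n i j"
    have "\<exists>ij. ij \<in> P \<and> ?X = Jset p lam n (fst ij) (snd ij)" using that by auto
    then have s: "(SOME ij. ij \<in> P \<and> ?X = Jset p lam n (fst ij) (snd ij)) \<in> P \<and>
        ?X = Jset p lam n (fst (SOME ij. ij \<in> P \<and> ?X = Jset p lam n (fst ij) (snd ij)))
                          (snd (SOME ij. ij \<in> P \<and> ?X = Jset p lam n (fst ij) (snd ij)))"
      by (rule someI_ex)
    obtain i0 j0 where e: "(SOME ij. ij \<in> P \<and> ?X = Jset p lam n (fst ij) (snd ij)) = (i0, j0)"
      by fastforce
    from s e have h: "(i0, j0) \<in> P" "?X = Jset p lam n i0 j0" by auto
    have "\<phi> ?X = Jset p lam n i0 (lam i0 - j0 + 1)" unfolding \<phi>_def e by simp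
    also have "\<dots> = Jset p lam n i (lam i - j + 1)"
      using key[OF that h(1)] key[OF h(1) that] h(2) by blast
    finally show ?thesis .
  qed
  show ?thesis
  proof (rule exI[of _ \<phi>], intro conjI)
    show "\<forall>X\<in>JG p lam n. \<phi> X \<in> JG p lam n"
      unfolding JG using phi Pd by fastforce
    show "\<forall>X\<in>JG p lam n. \<phi> (\<phi> X) = X"
      unfolding JG using phi Pd Pdd by fastforce
    show "\<forall>X\<in>JG p lam n. \<forall>Y\<in>JG p lam n. X \<subseteq> Y \<longrightarrow> \<phi> Y \<subseteq> \<phi> X"
      unfolding JG using phi key by fastforce
    show "\<forall>i j. 1 \<le> i \<and> i \<le> n \<and> 1 \<le> j \<and> j \<le> lam i \<longrightarrow>
                 \<phi> (Jset p lam n i j) = Jset p lam n i (lam i - j + 1)"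
      using phi by (auto simp: P_def)
  qed
qed

end
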